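(* Let $\alpha \ge 2$ be a constant and let $\gamma = 226\alpha$. Let $S$ be a set of $n$ distinct totally ordered elements. Let $A$ be a sequence of $m \ge \max\{64, \sqrt{n}\}$ elements chosen uniformly at random from $S$ without replacement (arranged in some order), and let $B$ be a set of at most $m$ elements chosen uniformly at random without replacement from $S \setminus A$. Let $d$ be an integer with $\max\{\mathrm{disl}(A), \log n\} \le d \le \frac{\sqrt{n}}{2160\alpha}$ and, for each $x \in B$, let $r_x \in \{1,\dots,m\}$ be an integer with $|r_x - \mathrm{rank}(x,A)| \le \alpha d$. Then the sequence $\widetilde{S}$ obtained by simultaneously inserting each element $x \in B$ into position $r_x$ of $A$ (breaking ties arbitrarily) has maximum dislocation at most $\gamma d$ with probability at least $1 - O(n^{-3})$.
   Context: For a set or sequence $T$ and an element $x$: $\mathrm{rank}(x,T) = 1 + |\{y\in T : y < x\}|$. For a sequence $T$ and $y \in T$, the dislocation of $y$ is $|\mathrm{pos}(y,T) - \mathrm{rank}(y,T)|$, where $\mathrm{pos}(y,T)$ is the position of $y$ in $T$; $\mathrm{disl}(T)$ is the maximum dislocation over elements of $T$. $\log$ is the binary logarithm. In the paper $\alpha$ is the constant from the noisy binary search theorem (depending only on the comparison error bound $p$). *)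

theory Defs
  imports "HOL-Probability.Probability"
begin

definition rank :: "'a::linorder \<Rightarrow> 'a set \<Rightarrow> nat" where
  "rank x T = 1 + card {y \<in> T. y < x}"

definition disl :: "'a::linorder list \<Rightarrow> nat" where
  "disl T = Max (insert 0 ((\<lambda>i. nat \<bar>int (i + 1) - int (rank (T ! i) (set T))\<bar>) ` {..<length T}))"

text \<open>T is a result of simultaneously inserting each x in B into position r x of the
  sequence As: the elements of As keep their order, and exactly r x - 1 elements of As
  precede x in T (i.e. x is placed immediately before the (r x)-th element of As);
  ties between elements of B with equal r are broken arbitrarily.\<close>
definition insertion_result :: "'a list \<Rightarrow> 'a set \<Rightarrow> ('a \<Rightarrow> nat) \<Rightarrow> 'a list \<Rightarrow> bool" where
  "insertion_result As B r T \<longleftrightarrow>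
     distinct T \<and> set T = set As \<union> B \<and>
     filter (\<lambda>y. y \<in> set As) T = As \<and>
     (\<forall>x\<in>B. length (filter (\<lambda>y. y \<in> set As) (takeWhile (\<lambda>y. y \<noteq> x) T)) = r x - 1)"

definition sample_AB :: "'a set \<Rightarrow> nat \<Rightarrow> nat \<Rightarrow> ('a set \<times> 'a set) pmf" where
  "sample_AB S m k =
     do { A \<leftarrow> pmf_of_set {A. A \<subseteq> S \<and> card A = m};
          B \<leftarrow> pmf_of_set {B. B \<subseteq> S - A \<and> card B = k};
          return_pmf (A, B) }"

end

theory Submission
  imports Defs
begin

lemma takeWhile_neq_nth:
  assumes "distinct xs" "i < length xs"
  shows "takeWhile (\<lambda>y. y \<noteq> xs ! i) xs = take i xs"
  using assms
proof (induction xs arbitrary: i)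
  case Nil then show ?case by simp
next
  case (Cons x xs)
  show ?case
  proof (cases i)
    case 0 then show ?thesis by simp
  next
    case (Suc j)
    with Cons.prems have "x \<noteq> xs ! j" by (auto simp: nth_mem)
    with Suc Cons show ?thesis by simp
  qed
qed

lemma disl_ge:
  assumes "i < length T"
  shows "nat \<bar>int (i + 1) - int (rank (T ! i) (set T))\<bar> \<le> disl T"
  unfolding disl_def using assms by (intro Max_ge) auto

lemma disl_le:
  assumes "\<And>i. i < length T \<Longrightarrow> nat \<bar>int (i + 1) - int (rank (T ! i) (set T))\<bar> \<le> b"
  shows "disl T \<le> b"
  unfolding disl_def using assms by (subst Max_le_iff) auto

lemma filter_take_mono:
  assumes "i \<le> j"
  shows "length (filter P (take i xs)) \<le> length (filter P (take j xs))"
proof -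
  have "take j xs = take i xs @ take (j - i) (drop i xs)"
    using assms by (metis le_add_diff_inverse take_add)
  then show ?thesis by simp
qed

lemma real_nat_abs_diff: "real (nat \<bar>int a - int b\<bar>) = \<bar>real a - real b\<bar>"
  by (metis nat_abs_triangle_ineq nat_int of_int_abs of_int_of_nat_eq of_nat_diff abs_of_nonneg
      of_int_diff of_nat_nat abs_ge_zero)

lemma nth_append_len_lemma:
  assumes "xs = ys @ z # zs"
  shows "length ys < length xs" "xs ! length ys = z"
  using assms by auto

lemma upper_cnt:
  fixes z :: "'a::linorder"
  assumes fB: "finite B" and ZB: "Z \<subseteq> B" and s: "s > 0"
    and Zy: "\<And>y. y \<in> Z \<Longrightarrow> z \<le> y \<and> real (card {a\<in>A. z \<le> a \<and> a \<le> y}) \<le> M"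
    and IP: "\<forall>u v. real (card {a\<in>A. u \<le> a \<and> a \<le> v}) \<le> M \<longrightarrow> card {b\<in>B. u \<le> b \<and> b \<le> v} < s"
  shows "card Z < s"
proof (cases "Z = {}")
  case True then show ?thesis using s by simp
next
  case False
  have fZ: "finite Z" using fB ZB finite_subset by blast
  define y where "y = Max Z"
  have yZ: "y \<in> Z" using False fZ y_def by simp
  have "Z \<subseteq> {b\<in>B. z \<le> b \<and> b \<le> y}" using ZB Zy y_def fZ by auto
  then have "card Z \<le> card {b\<in>B. z \<le> b \<and> b \<le> y}" using fB by (intro card_mono) auto
  also have "\<dots> < s" using IP Zy[OF yZ] by blast
  finally show ?thesis .
qed

lemma lower_cnt:
  fixes z :: "'a::linorder"
  assumes fB: "finite B" and ZB: "Z \<subseteq> B" and s: "s > 0"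
    and Zy: "\<And>y. y \<in> Z \<Longrightarrow> y \<le> z \<and> real (card {a\<in>A. y \<le> a \<and> a \<le> z}) \<le> M"
    and IP: "\<forall>u v. real (card {a\<in>A. u \<le> a \<and> a \<le> v}) \<le> M \<longrightarrow> card {b\<in>B. u \<le> b \<and> b \<le> v} < s"
  shows "card Z < s"
proof (cases "Z = {}")
  case True then show ?thesis using s by simp
next
  case False
  have fZ: "finite Z" using fB ZB finite_subset by blast
  define y where "y = Min Z"
  have yZ: "y \<in> Z" using False fZ y_def by simp
  have "Z \<subseteq> {b\<in>B. y \<le> b \<and> b \<le> z}" using ZB Zy y_def fZ by auto
  then have "card Z \<le> card {b\<in>B. y \<le> b \<and> b \<le> z}" using fB by (intro card_mono) auto
  also have "\<dots> < s" using IP Zy[OF yZ] by blast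
  finally show ?thesis .
qed

lemma card_between_up:
  fixes z y :: "'a::linorder"
  assumes "finite A" "y \<notin> A" "z \<le> y"
  shows "card {a\<in>A. z \<le> a \<and> a \<le> y} + card {a\<in>A. a < z} \<le> card {a\<in>A. a < y}"
proof -
  have "card {a\<in>A. z \<le> a \<and> a \<le> y} + card {a\<in>A. a < z}
        = card ({a\<in>A. z \<le> a \<and> a \<le> y} \<union> {a\<in>A. a < z})"
    using assms by (intro card_Un_disjoint[symmetric]) auto
  also have "\<dots> \<le> card {a\<in>A. a < y}"
    using assms by (intro card_mono) (auto simp: order.order_iff_strict)
  finally show ?thesis .
qed

lemma card_between_down:
  fixes z y :: "'a::linorder"
  assumes "finite A" "y \<le> z"
  shows "card {a\<in>A. y \<le> a \<and> a \<le> z} + card {a\<in>A. a < y} \<le> card {a\<in>A. a \<le> z}"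
proof -
  have "card {a\<in>A. y \<le> a \<and> a \<le> z} + card {a\<in>A. a < y}
        = card ({a\<in>A. y \<le> a \<and> a \<le> z} \<union> {a\<in>A. a < y})"
    using assms by (intro card_Un_disjoint[symmetric]) auto
  also have "\<dots> \<le> card {a\<in>A. a \<le> z}"
    using assms by (intro card_mono) auto
  finally show ?thesis .
qed

lemma card_le_eq:
  fixes z :: "'a::linorder"
  assumes "finite A"
  shows "card {a\<in>A. a \<le> z} = card {a\<in>A. a < z} + (if z \<in> A then 1 else 0)"
proof (cases "z \<in> A")
  case True
  have "{a\<in>A. a \<le> z} = insert z {a\<in>A. a < z}" using True by auto
  then show ?thesis using True assms by simp
next
  case False
  have "{a\<in>A. a \<le> z} = {a\<in>A. a < z}" using False by (auto simp: order.order_iff_strict)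
  then show ?thesis using False by simp
qed

lemma det_bound:
  fixes As :: "'a::linorder list" and B :: "'a set" and r :: "'a \<Rightarrow> nat" and T :: "'a list"
    and \<alpha> D :: real and s :: nat
  assumes dA: "distinct As" and disj: "B \<inter> set As = {}" and fB: "finite B"
    and al: "\<alpha> \<ge> 1" and D0: "D \<ge> 0" and s0: "s > 0"
    and dis: "real (disl As) \<le> D"
    and rB: "\<forall>x\<in>B. 1 \<le> r x \<and> \<bar>real (r x) - real (rank x (set As))\<bar> \<le> \<alpha> * D"
    and ins: "insertion_result As B r T"
    and IP: "\<forall>u v. real (card {a\<in>set As. u \<le> a \<and> a \<le> v}) \<le> 2 * \<alpha> * D
                 \<longrightarrow> card {b\<in>B. u \<le> b \<and> b \<le> v} < s"
  shows "real (disl T) \<le> \<alpha> * D + 2 * real s"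
proof -
  define A where "A = set As"
  have fA: "finite A" unfolding A_def by simp
  have dT: "distinct T" and sT: "set T = A \<union> B" and fT: "filter (\<lambda>y. y \<in> A) T = As"
    and rT: "\<forall>x\<in>B. length (filter (\<lambda>y. y \<in> A) (takeWhile (\<lambda>y. y \<noteq> x) T)) = r x - 1"
    using ins unfolding insertion_result_def A_def by auto
  define c where "c j = length (filter (\<lambda>y. y \<in> A) (take j T))" for j
  have cmono: "c j \<le> c j'" if "j \<le> j'" for j j'
    unfolding c_def using that by (rule filter_take_mono)
  have cB: "real (c j) + 1 = real (r (T ! j))" if "j < length T" "T ! j \<in> B" for j
  proof -
    have "c j = r (T ! j) - 1"
      using rT that takeWhile_neq_nth[OF dT that(1)] unfolding c_def by auto
    moreover have "1 \<le> r (T ! j)" using rB that by auto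
    ultimately show ?thesis by simp
  qed
  have rkdef: "real (rank x A) = 1 + real (card {a\<in>A. a < x})" for x
    unfolding rank_def by simp
  have "real (disl T) \<le> \<alpha> * D + 2 * real s"
  proof -
    have "nat \<bar>int (i + 1) - int (rank (T ! i) (set T))\<bar> \<le> nat \<lfloor>\<alpha> * D + 2 * real s\<rfloor>"
      if i: "i < length T" for i
    proof -
      define z where "z = T ! i"
      define \<rho> where "\<rho> = real (c i) + 1"
      have zT: "z \<in> A \<union> B" using i sT z_def nth_mem by blast
      have cSuc: "c (Suc i) = c i + (if z \<in> A then 1 else 0)"
        unfolding c_def z_def using i by (simp add: take_Suc_conv_app_nth)
      have K: "\<bar>\<rho> - real (rank z A)\<bar> \<le> \<alpha> * D"
      proof (cases "z \<in> B")
        case True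
        then show ?thesis using cB[OF i] rB unfolding \<rho>_def z_def A_def by auto
      next
        case False
        then have zA: "z \<in> A" using zT by auto
        have "As = filter (\<lambda>y. y \<in> A) (take i T) @ filter (\<lambda>y. y \<in> A) (drop i T)"
          using fT by (metis append_take_drop_id filter_append)
        also have "drop i T = z # drop (Suc i) T" using i z_def by (simp add: Cons_nth_drop_Suc)
        finally have As_eq: "As = filter (\<lambda>y. y \<in> A) (take i T) @ z # filter (\<lambda>y. y \<in> A) (drop (Suc i) T)"
          using zA by simp
        then have jl: "c i < length As" and jz: "As ! c i = z" unfolding c_def
          by (rule nth_append_len_lemma)+
        have "nat \<bar>int (c i + 1) - int (rank (As ! c i) (set As))\<bar> \<le> disl As"
          using disl_ge[OF jl] .
        then have "\<bar>real (c i + 1) - real (rank z A)\<bar> \<le> real (disl As)"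
          using jz unfolding A_def real_nat_abs_diff[symmetric] by (simp only: of_nat_le_iff)
        moreover have "D \<le> \<alpha> * D" using al D0 by (simp add: mult_le_cancel_right1)
        ultimately show ?thesis using dis unfolding \<rho>_def by simp
      qed
      define P where "P = set (take i T)"
      define X where "X = P \<inter> B"
      define Y where "Y = {y\<in>B. y < z}"
      have zP: "z \<notin> P"
      proof
        assume "z \<in> P"
        then obtain p where p: "p < i" "T ! p = z" using i unfolding P_def
          by (auto simp: in_set_conv_nth)
        then show False using nth_eq_iff_index_eq[OF dT, of p i] i z_def by simp
      qed
      have PT: "P \<subseteq> A \<union> B" unfolding P_def using sT by (metis set_take_subset)
      have cardP: "card P = i" unfolding P_def using dT i by (simp add: distinct_card)
      have cardPA: "card (P \<inter> A) = c i"
      proof -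
        have "set (filter (\<lambda>y. y \<in> A) (take i T)) = P \<inter> A" unfolding P_def by auto
        moreover have "distinct (filter (\<lambda>y. y \<in> A) (take i T))" using dT by simp
        ultimately show ?thesis unfolding c_def by (metis distinct_card)
      qed
      have "card P = card (P \<inter> A) + card X"
      proof -
        have "P = (P \<inter> A) \<union> X" using PT unfolding X_def by auto
        moreover have "(P \<inter> A) \<inter> X = {}" using disj unfolding X_def A_def by auto
        ultimately show ?thesis using fA fB unfolding X_def
          by (metis card_Un_disjoint finite_Int)
      qed
      then have posq: "real (i + 1) = \<rho> + real (card X)" using cardP cardPA unfolding \<rho>_def by simp
      have rankT: "real (rank z (set T)) = real (rank z A) + real (card Y)"
      proof -
        have "{y \<in> set T. y < z} = {y\<in>A. y < z} \<union> Y" unfolding Y_def using sT by auto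
        moreover have "{y\<in>A. y < z} \<inter> Y = {}" unfolding Y_def using disj A_def by auto
        ultimately have "card {y \<in> set T. y < z} = card {y\<in>A. y < z} + card Y"
          using fA fB unfolding Y_def by (simp add: card_Un_disjoint)
        then show ?thesis unfolding rank_def by simp
      qed
      have fX: "finite X" "finite Y" unfolding X_def Y_def using fB by auto
      have XY: "card (X - Y) < s"
      proof (rule upper_cnt[OF fB _ s0 _ IP[unfolded A_def[symmetric]], where z = z])
        show "X - Y \<subseteq> B" unfolding X_def by auto
      next
        fix y assume y: "y \<in> X - Y"
        then have yB: "y \<in> B" and yP: "y \<in> P" and yz: "\<not> y < z" unfolding X_def Y_def by auto
        have zy: "z \<le> y" using yz by simp
        have yA: "y \<notin> A" using yB disj A_def by auto
        obtain iy where iy: "iy < i" "T ! iy = y" using yP i unfolding P_def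
          by (auto simp: in_set_conv_nth)
        have iyl: "iy < length T" using iy i by simp
        have "real (c iy) + 1 = real (r y)" using cB[OF iyl] iy yB by simp
        moreover have "real (r y) \<le> real (rank y A) + \<alpha> * D" using rB yB A_def by force
        moreover have "real (r y) - real (rank y A) \<ge> - (\<alpha> * D)" using rB yB A_def by force
        moreover have "c iy \<le> c i" using cmono iy by simp
        ultimately have ry: "real (rank y A) \<le> \<rho> + \<alpha> * D" unfolding \<rho>_def by linarith
        have "card {a\<in>A. z \<le> a \<and> a \<le> y} + card {a\<in>A. a < z} \<le> card {a\<in>A. a < y}"
          using card_between_up[OF fA yA zy] .
        then have "real (card {a\<in>A. z \<le> a \<and> a \<le> y}) \<le> real (rank y A) - real (rank z A)"
          unfolding rkdef by linarith
        then show "z \<le> y \<and> real (card {a\<in>A. z \<le> a \<and> a \<le> y}) \<le> 2 * \<alpha> * D"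
          using ry K zy by linarith
      qed
      have YX: "card (Y - X) < s"
      proof (rule lower_cnt[OF fB _ s0 _ IP[unfolded A_def[symmetric]], where z = z])
        show "Y - X \<subseteq> B" unfolding Y_def by auto
      next
        fix y assume y: "y \<in> Y - X"
        then have yB: "y \<in> B" and yP: "y \<notin> P" and yz: "y < z" unfolding X_def Y_def by auto
        have yzl: "y \<le> z" using yz by simp
        obtain iy where iy: "iy < length T" "T ! iy = y" using yB sT by (metis UnCI in_set_conv_nth)
        have "\<not> iy < i" using yP iy unfolding P_def by (metis in_set_conv_nth length_take min_less_iff_conj nth_take)
        moreover have "iy \<noteq> i" using iy yz z_def by auto
        ultimately have iyi: "Suc i \<le> iy" by simp
        have "real (c iy) + 1 = real (r y)" using cB[OF iy(1)] iy yB by simp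
        moreover have "real (r y) - real (rank y A) \<le> \<alpha> * D" using rB yB A_def by force
        moreover have "c (Suc i) \<le> c iy" using cmono iyi by simp
        ultimately have ry: "real (rank y A) \<ge> \<rho> + (if z \<in> A then 1 else 0) - \<alpha> * D"
          unfolding \<rho>_def using cSuc by (auto split: if_splits)
        have "card {a\<in>A. y \<le> a \<and> a \<le> z} + card {a\<in>A. a < y} \<le> card {a\<in>A. a \<le> z}"
          using card_between_down[OF fA yzl] .
        then have "real (card {a\<in>A. y \<le> a \<and> a \<le> z}) \<le> real (rank z A) + (if z \<in> A then 1 else 0) - real (rank y A)"
          unfolding rkdef card_le_eq[OF fA] by (auto split: if_splits)
        then show "y \<le> z \<and> real (card {a\<in>A. y \<le> a \<and> a \<le> z}) \<le> 2 * \<alpha> * D"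
          using ry K yzl by (auto split: if_splits)
      qed
      have "\<bar>real (card X) - real (card Y)\<bar> \<le> real (card (X - Y)) + real (card (Y - X))"
      proof -
        have "card X = card (X \<inter> Y) + card (X - Y)" using fX
          by (metis card_Int_Diff)
        moreover have "card Y = card (X \<inter> Y) + card (Y - X)" using fX
          by (metis card_Int_Diff Int_commute)
        ultimately show ?thesis by simp
      qed
      then have "\<bar>real (i + 1) - real (rank z (set T))\<bar> \<le> \<alpha> * D + 2 * real s"
        using posq rankT K XY YX by linarith
      then show ?thesis unfolding z_def by linarith
    qed
    then have "disl T \<le> nat \<lfloor>\<alpha> * D + 2 * real s\<rfloor>" by (intro disl_le)
    then have "real (disl T) \<le> real (nat \<lfloor>\<alpha> * D + 2 * real s\<rfloor>)" by simp
    also have "\<dots> = of_int \<lfloor>\<alpha> * D + 2 * real s\<rfloor>"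
      using D0 al by (intro of_nat_nat) simp
    also have "\<dots> \<le> \<alpha> * D + 2 * real s" by (rule of_int_floor_le)
    finally show ?thesis .
  qed
  then show ?thesis .
qed

definition win :: "'a::linorder set \<Rightarrow> nat \<Rightarrow> nat \<Rightarrow> 'a set" where
  "win U s i = (\<lambda>p. sorted_list_of_set U ! p) ` {i..<i+s}"

definition badw :: "'a::linorder set \<Rightarrow> 'a set \<Rightarrow> nat \<Rightarrow> nat \<Rightarrow> bool" where
  "badw U A s L \<longleftrightarrow> (\<exists>i. i + s \<le> card U \<and> card (A \<inter> win U s i) \<le> L)"

lemma IP_from_good:
  fixes U :: "'a::linorder set"
  assumes fU: "finite U" and AU: "A \<subseteq> U" and good: "\<not> badw U A s L"
    and cA: "card {a\<in>A. u \<le> a \<and> a \<le> v} \<le> L"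
  shows "card {b\<in>U - A. u \<le> b \<and> b \<le> v} < s"
proof (rule ccontr)
  assume nc: "\<not> ?thesis"
  define us where "us = sorted_list_of_set U"
  define N where "N = length us"
  have sus: "sorted us" and dus: "distinct us" and setus: "set us = U"
    unfolding us_def using fU by auto
  have NU: "N = card U" unfolding N_def us_def by simp
  define P where "P = {p. p < N \<and> u \<le> us ! p \<and> us ! p \<le> v}"
  have fP: "finite P" unfolding P_def by simp
  have "{b\<in>U - A. u \<le> b \<and> b \<le> v} \<subseteq> (\<lambda>p. us ! p) ` P"
  proof
    fix b assume b: "b \<in> {b\<in>U - A. u \<le> b \<and> b \<le> v}"
    then obtain p where "p < N" "us ! p = b" using setus unfolding N_def
      by (auto simp: in_set_conv_nth)
    then show "b \<in> (\<lambda>p. us ! p) ` P" using b unfolding P_def by auto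
  qed
  then have "card {b\<in>U - A. u \<le> b \<and> b \<le> v} \<le> card P"
    using fP by (meson card_image_le finite_imageI card_mono order_trans)
  then have sP: "s \<le> card P" using nc by simp
  show False
  proof (cases "s = 0")
    case True
    then have "badw U A s L" unfolding badw_def win_def by auto
    then show False using good by simp
  next
    case False
    then have Pne: "P \<noteq> {}" using sP by auto
    define i where "i = Min P"
    have iP: "i \<in> P" unfolding i_def using Pne fP by simp
    have imin: "\<And>p. p \<in> P \<Longrightarrow> i \<le> p" unfolding i_def using fP by simp
    have sub: "{i..<i+s} \<subseteq> P"
    proof
      fix q assume q: "q \<in> {i..<i+s}"
      show "q \<in> P"
      proof (rule ccontr)
        assume qP: "q \<notin> P"
        have "P \<subseteq> {i..<q}"
        proof
          fix p assume pP: "p \<in> P"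
          have ip: "i \<le> p" using imin pP .
          show "p \<in> {i..<q}"
          proof (rule ccontr)
            assume "p \<notin> {i..<q}"
            then have qp: "q \<le> p" using ip by auto
            have pN: "p < N" using pP unfolding P_def by simp
            then have qN: "q < N" using qp by simp
            have "us ! i \<le> us ! q" using sus q qN unfolding N_def by (intro sorted_nth_mono) auto
            moreover have "us ! q \<le> us ! p" using sus qp pN unfolding N_def by (intro sorted_nth_mono) auto
            ultimately have "q \<in> P" using iP pP qN unfolding P_def by auto
            then show False using qP by simp
          qed
        qed
        then have "card P \<le> q - i" by (metis card_atLeastLessThan card_mono finite_atLeastLessThan)
        moreover have "q - i < s"
        proof -
          have "i \<le> q" "q < i + s" using q by auto
          then show ?thesis by linarith
        qed
        ultimately show False using sP by (meson leD le_trans)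
      qed
    qed
    have isN: "i + s \<le> N"
    proof -
      have "i + s - 1 \<in> P" using sub False by auto
      then show ?thesis unfolding P_def using False by auto
    qed
    have "win U s i \<subseteq> {z\<in>U. u \<le> z \<and> z \<le> v}"
      unfolding win_def us_def[symmetric] using sub setus unfolding P_def N_def by auto
    then have "A \<inter> win U s i \<subseteq> {a\<in>A. u \<le> a \<and> a \<le> v}" by auto
    moreover have "finite {a\<in>A. u \<le> a \<and> a \<le> v}" using finite_subset[OF AU fU] by simp
    ultimately have "card (A \<inter> win U s i) \<le> card {a\<in>A. u \<le> a \<and> a \<le> v}"
      by (intro card_mono)
    then have "card (A \<inter> win U s i) \<le> L" using cA by simp
    then have "badw U A s L" unfolding badw_def using isN NU by auto
    then show False using good by simp
  qed
qed

lemma card_win: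
  fixes U :: "'a::linorder set"
  assumes fU: "finite U" and isU: "i + s \<le> card U"
  shows "card (win U s i) = s" "win U s i \<subseteq> U"
proof -
  define us where "us = sorted_list_of_set U"
  have dus: "distinct us" and setus: "set us = U" and len: "length us = card U"
    unfolding us_def using fU by auto
  have "inj_on (\<lambda>p. us ! p) {i..<i+s}"
    using dus isU len by (auto simp: inj_on_def nth_eq_iff_index_eq)
  then show "card (win U s i) = s" unfolding win_def us_def[symmetric]
    by (simp add: card_image)
  show "win U s i \<subseteq> U" unfolding win_def us_def[symmetric] using isU len setus
    by (auto simp: nth_mem)
qed

lemma binom_ratio:
  assumes "t \<le> N" "N \<le> 2 * m"
  shows "((N - t) choose m) * 2 ^ t \<le> N choose m"
  using assms
proof (induction t)
  case 0 then show ?case by simp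
next
  case (Suc t)
  define a where "a = N - t"
  have a0: "a > 0" using Suc.prems unfolding a_def by simp
  have am: "a \<le> 2 * m" using Suc.prems unfolding a_def by simp
  have Na: "N - Suc t = a - 1" unfolding a_def by simp
  have e: "(a - m) * (a choose m) = a * ((a - 1) choose m)" by (rule binomial_absorb_comp)
  have am2: "2 * (a - m) \<le> a" using am by linarith
  have "a * (2 * ((a - 1) choose m)) = 2 * (a * ((a - 1) choose m))" by simp
  also have "\<dots> = 2 * ((a - m) * (a choose m))" using e by simp
  also have "\<dots> = (2 * (a - m)) * (a choose m)" by (simp only: mult.assoc)
  also have "\<dots> \<le> a * (a choose m)" using am2 by (rule mult_right_mono) simp
  finally have "a * (2 * ((a - 1) choose m)) \<le> a * (a choose m)" .
  then have le2: "2 * ((a - 1) choose m) \<le> a choose m" using a0 by simp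
  have "((N - Suc t) choose m) * 2 ^ Suc t = (2 * ((a - 1) choose m)) * 2 ^ t"
    unfolding Na by simp
  also have "\<dots> \<le> (a choose m) * 2 ^ t" using le2 by (rule mult_right_mono) simp
  also have "\<dots> \<le> N choose m" using Suc unfolding a_def by simp
  finally show ?case .
qed

lemma count_bad:
  fixes U :: "'a::linorder set"
  assumes fU: "finite U" and NU: "card U = N" and Ls: "L \<le> s" and s0: "0 < s"
  shows "card {A. A \<subseteq> U \<and> card A = m \<and> badw U A s L}
           \<le> N * ((s choose L) * ((N - (s - L)) choose m))"
proof -
  define t where "t = s - L"
  define I where "I = {i. i + s \<le> N}"
  define Fam where "Fam i = {Q. Q \<subseteq> win U s i \<and> card Q = t}" for i
  have I_sub: "I \<subseteq> {..<N}" unfolding I_def using s0 by auto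
  have fI: "finite I" using I_sub finite_subset by blast
  have cI: "card I \<le> N" using I_sub by (metis card_lessThan card_mono finite_lessThan)
  have sub: "{A. A \<subseteq> U \<and> card A = m \<and> badw U A s L}
        \<subseteq> (\<Union>i\<in>I. \<Union>Q\<in>Fam i. {A. A \<subseteq> U - Q \<and> card A = m})"
  proof
    fix A assume "A \<in> {A. A \<subseteq> U \<and> card A = m \<and> badw U A s L}"
    then have AU: "A \<subseteq> U" and cA: "card A = m" and b: "badw U A s L" by auto
    from b obtain i where i: "i + s \<le> card U" "card (A \<inter> win U s i) \<le> L"
      unfolding badw_def by auto
    have cw: "card (win U s i) = s" and wU: "win U s i \<subseteq> U" using card_win[OF fU i(1)] by auto
    have fw: "finite (win U s i)" using wU fU finite_subset by blast
    have "card (win U s i - A) = s - card (A \<inter> win U s i)"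
      using cw fw by (metis card_Diff_subset_Int finite_Int Int_commute)
    then have "t \<le> card (win U s i - A)" using i(2) unfolding t_def by simp
    then obtain Q where Q: "Q \<subseteq> win U s i - A" "card Q = t" by (meson obtain_subset_with_card_n)
    have "Q \<in> Fam i" unfolding Fam_def using Q by auto
    moreover have "A \<subseteq> U - Q" using AU Q by auto
    moreover have "i \<in> I" unfolding I_def using i NU by simp
    ultimately show "A \<in> (\<Union>i\<in>I. \<Union>Q\<in>Fam i. {A. A \<subseteq> U - Q \<and> card A = m})"
      using cA by blast
  qed
  have inner: "card (\<Union>Q\<in>Fam i. {A. A \<subseteq> U - Q \<and> card A = m})
                 \<le> (s choose L) * ((N - t) choose m)" if iI: "i \<in> I" for i
  proof -
    have isU: "i + s \<le> card U" using iI NU unfolding I_def by simp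
    have cw: "card (win U s i) = s" and wU: "win U s i \<subseteq> U" using card_win[OF fU isU] by auto
    have fw: "finite (win U s i)" using wU fU finite_subset by blast
    have fF: "finite (Fam i)" unfolding Fam_def using fw by simp
    have "card (\<Union>Q\<in>Fam i. {A. A \<subseteq> U - Q \<and> card A = m})
          \<le> (\<Sum>Q\<in>Fam i. card {A. A \<subseteq> U - Q \<and> card A = m})" by (rule card_UN_le[OF fF])
    also have "\<dots> = (\<Sum>Q\<in>Fam i. (N - t) choose m)"
    proof (rule sum.cong[OF refl])
      fix Q assume "Q \<in> Fam i"
      then have Q: "Q \<subseteq> win U s i" "card Q = t" unfolding Fam_def by auto
      have "card (U - Q) = N - t" using Q wU NU fU
        by (metis card_Diff_subset finite_subset order_trans)
      then show "card {A. A \<subseteq> U - Q \<and> card A = m} = (N - t) choose m"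
        using fU by (simp add: n_subsets)
    qed
    also have "\<dots> = card (Fam i) * ((N - t) choose m)" by simp
    also have "card (Fam i) = s choose L"
    proof -
      have "card (Fam i) = s choose t" unfolding Fam_def using n_subsets[OF fw] cw by simp
      also have "\<dots> = s choose L" unfolding t_def using Ls
        by (metis binomial_symmetric diff_diff_cancel diff_le_self)
      finally show ?thesis .
    qed
    finally show ?thesis .
  qed
  have "card {A. A \<subseteq> U \<and> card A = m \<and> badw U A s L}
        \<le> card (\<Union>i\<in>I. \<Union>Q\<in>Fam i. {A. A \<subseteq> U - Q \<and> card A = m})"
  proof (rule card_mono[OF _ sub])
    have "finite {A. A \<subseteq> U}" using fU by simp
    then show "finite (\<Union>i\<in>I. \<Union>Q\<in>Fam i. {A. A \<subseteq> U - Q \<and> card A = m})"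
      by (rule finite_subset[rotated]) auto
  qed
  also have "\<dots> \<le> (\<Sum>i\<in>I. card (\<Union>Q\<in>Fam i. {A. A \<subseteq> U - Q \<and> card A = m}))"
    by (rule card_UN_le[OF fI])
  also have "\<dots> \<le> (\<Sum>i\<in>I. (s choose L) * ((N - t) choose m))"
    by (rule sum_mono) (rule inner)
  also have "\<dots> = card I * ((s choose L) * ((N - t) choose m))" by simp
  also have "\<dots> \<le> N * ((s choose L) * ((N - t) choose m))" using cI by (rule mult_right_mono) simp
  finally show ?thesis unfolding t_def .
qed

definition Pairs :: "'a set \<Rightarrow> nat \<Rightarrow> nat \<Rightarrow> ('a set \<times> 'a set) set" where
  "Pairs S m k = {(A, B). A \<subseteq> S \<and> card A = m \<and> B \<subseteq> S - A \<and> card B = k}"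

lemma finite_Pairs:
  assumes "finite S" shows "finite (Pairs S m k)"
proof -
  have "Pairs S m k \<subseteq> Pow S \<times> Pow S" unfolding Pairs_def by auto
  then show ?thesis using assms finite_subset by blast
qed

lemma sample_eq:
  assumes fS: "finite S" and mk: "m + k \<le> card S"
  shows "sample_AB S m k = pmf_of_set (Pairs S m k)"
proof -
  define AA where "AA = {A. A \<subseteq> S \<and> card A = m}"
  define BB where "BB A = {B. B \<subseteq> S - A \<and> card B = k}" for A
  have fAA: "finite AA" unfolding AA_def using fS by simp
  have AAne: "AA \<noteq> {}"
  proof -
    obtain A where "A \<subseteq> S" "card A = m" using mk by (meson le_add1 order_trans obtain_subset_with_card_n)
    then show ?thesis unfolding AA_def by auto
  qed
  have cSA: "card (S - A) = card S - m" if "A \<in> AA" for A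
  proof -
    have "A \<subseteq> S" "card A = m" using that unfolding AA_def by auto
    moreover have "finite A" using \<open>A \<subseteq> S\<close> fS finite_subset by blast
    ultimately show ?thesis by (simp add: card_Diff_subset)
  qed
  have fBB: "finite (BB A)" for A unfolding BB_def using fS by simp
  have BBne: "BB A \<noteq> {}" if "A \<in> AA" for A
  proof -
    have "k \<le> card (S - A)" using cSA[OF that] mk by simp
    then obtain B where "B \<subseteq> S - A" "card B = k" by (meson obtain_subset_with_card_n)
    then show ?thesis unfolding BB_def by auto
  qed
  have inner: "bind_pmf (pmf_of_set (BB A)) (\<lambda>B. return_pmf (A, B)) = pmf_of_set (Pair A ` BB A)"
    if "A \<in> AA" for A
  proof -
    have "bind_pmf (pmf_of_set (BB A)) (\<lambda>B. return_pmf (A, B)) = map_pmf (Pair A) (pmf_of_set (BB A))"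
      by (simp add: map_pmf_def)
    also have "\<dots> = pmf_of_set (Pair A ` BB A)"
      using BBne[OF that] fBB by (intro map_pmf_of_set_inj) (auto simp: inj_on_def)
    finally show ?thesis .
  qed
  have "sample_AB S m k = bind_pmf (pmf_of_set AA) (\<lambda>A. pmf_of_set (Pair A ` BB A))"
    unfolding sample_AB_def AA_def[symmetric] BB_def[symmetric]
    using fAA AAne inner by (intro bind_pmf_cong) auto
  also have "\<dots> = pmf_of_set (\<Union>A\<in>AA. Pair A ` BB A)"
  proof (rule pmf_of_set_UN[symmetric])
    show "finite (\<Union>A\<in>AA. Pair A ` BB A)" using fAA fBB by simp
    show "AA \<noteq> {}" by (rule AAne)
    show "Pair A ` BB A \<noteq> {}" if "A \<in> AA" for A using BBne[OF that] by simp
    show "card (Pair A ` BB A) = (card S - m) choose k" if "A \<in> AA" for A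
    proof -
      have "card (Pair A ` BB A) = card (BB A)" by (simp add: card_image inj_on_def)
      also have "\<dots> = (card S - m) choose k" unfolding BB_def using fS cSA[OF that]
        by (simp add: n_subsets)
      finally show ?thesis .
    qed
    show "disjoint_family_on (\<lambda>A. Pair A ` BB A) AA"
      unfolding disjoint_family_on_def by auto
  qed
  also have "(\<Union>A\<in>AA. Pair A ` BB A) = Pairs S m k"
    unfolding Pairs_def AA_def BB_def by auto
  finally show ?thesis .
qed

lemma card_pairs_pred:
  fixes S :: "'a set"
  assumes fS: "finite S" and mk: "m + k \<le> card S"
  shows "card {p\<in>Pairs S m k. Q (fst p) (snd p)}
    = (\<Sum>U\<in>{U. U \<subseteq> S \<and> card U = m + k}. card {A. A \<subseteq> U \<and> card A = m \<and> Q A (U - A)})"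
proof -
  define UU where "UU = {U. U \<subseteq> S \<and> card U = m + k}"
  define F where "F U = {A. A \<subseteq> U \<and> card A = m \<and> Q A (U - A)}" for U
  define g :: "'a set \<times> 'a set \<Rightarrow> 'a set \<times> 'a set" where "g = (\<lambda>(U, A). (A, U - A))"
  have bij: "bij_betw g (SIGMA U:UU. F U) {p\<in>Pairs S m k. Q (fst p) (snd p)}"
    unfolding bij_betw_def
  proof
    show "inj_on g (SIGMA U:UU. F U)"
    proof (rule inj_onI)
      fix x y assume x: "x \<in> (SIGMA U:UU. F U)" and y: "y \<in> (SIGMA U:UU. F U)" and e: "g x = g y"
      obtain U A where xe: "x = (U, A)" by fastforce
      obtain U' A' where ye: "y = (U', A')" by fastforce
      have "A \<subseteq> U" "A' \<subseteq> U'" using x y xe ye unfolding F_def by auto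
      moreover have "A = A'" "U - A = U' - A'" using e xe ye unfolding g_def by auto
      ultimately have "U = U'" by blast
      then show "x = y" using xe ye \<open>A = A'\<close> by simp
    qed
    show "g ` (SIGMA U:UU. F U) = {p\<in>Pairs S m k. Q (fst p) (snd p)}"
    proof
      show "g ` (SIGMA U:UU. F U) \<subseteq> {p\<in>Pairs S m k. Q (fst p) (snd p)}"
      proof
        fix p assume "p \<in> g ` (SIGMA U:UU. F U)"
        then obtain U A where UA: "U \<in> UU" "A \<in> F U" "p = (A, U - A)" unfolding g_def by auto
        have fU: "finite U" using UA fS unfolding UU_def by (auto intro: finite_subset)
        have AU: "A \<subseteq> U" "card A = m" "card U = m + k" using UA unfolding UU_def F_def by auto
        have "card (U - A) = k" using AU fU finite_subset[OF AU(1) fU]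
          by (simp add: card_Diff_subset)
        then show "p \<in> {p\<in>Pairs S m k. Q (fst p) (snd p)}"
          using UA unfolding UU_def F_def Pairs_def by auto
      qed
    next
      show "{p\<in>Pairs S m k. Q (fst p) (snd p)} \<subseteq> g ` (SIGMA U:UU. F U)"
      proof
        fix p assume p: "p \<in> {p\<in>Pairs S m k. Q (fst p) (snd p)}"
        obtain A B where pe: "p = (A, B)" by fastforce
        have A: "A \<subseteq> S" "card A = m" "B \<subseteq> S - A" "card B = k" "Q A B"
          using p pe unfolding Pairs_def by auto
        have fA: "finite A" "finite B" using A fS by (auto intro: finite_subset)
        have "card (A \<union> B) = m + k" using A fA by (subst card_Un_disjoint) auto
        then have "A \<union> B \<in> UU" unfolding UU_def using A by auto
        moreover have "A \<union> B - A = B" using A by auto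
        ultimately have "(A \<union> B, A) \<in> (SIGMA U:UU. F U)" unfolding F_def using A by auto
        moreover have "g (A \<union> B, A) = p" unfolding g_def pe using \<open>A \<union> B - A = B\<close> by simp
        ultimately show "p \<in> g ` (SIGMA U:UU. F U)" by force
      qed
    qed
  qed
  have "card {p\<in>Pairs S m k. Q (fst p) (snd p)} = card (SIGMA U:UU. F U)"
    using bij_betw_same_card[OF bij] by simp
  also have "\<dots> = (\<Sum>U\<in>UU. card (F U))"
  proof (rule card_SigmaI)
    show "finite UU" unfolding UU_def using fS by simp
    show "\<forall>U\<in>UU. finite (F U)"
    proof
      fix U assume "U \<in> UU"
      then have "finite U" using fS unfolding UU_def by (auto intro: finite_subset)
      moreover have "F U \<subseteq> Pow U" unfolding F_def by auto
      ultimately show "finite (F U)" by (meson finite_Pow_iff finite_subset)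
    qed
  qed
  finally show ?thesis unfolding UU_def F_def .
qed

lemma bad_count:
  fixes S :: "'a::linorder set"
  assumes fS: "finite S" and nS: "card S = n" and mk: "m + k \<le> n" and km: "k \<le> m"
    and s0: "0 < s" and Ls: "L \<le> s"
  shows "real (card {p\<in>Pairs S m k. badw (fst p \<union> snd p) (fst p) s L})
         \<le> real (card (Pairs S m k)) * (real n * real (s choose L) / 2 ^ (s - L))"
proof -
  define UU where "UU = {U. U \<subseteq> S \<and> card U = m + k}"
  define N where "N = m + k"
  define \<epsilon> where "\<epsilon> = real n * real (s choose L) / 2 ^ (s - L)"
  have e0: "\<epsilon> \<ge> 0" unfolding \<epsilon>_def by simp
  have cP: "card (Pairs S m k) = (\<Sum>U\<in>UU. card {A. A \<subseteq> U \<and> card A = m})"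
    using card_pairs_pred[OF fS, of m k "\<lambda>_ _. True"] mk nS unfolding UU_def by simp
  have "card {p\<in>Pairs S m k. badw (fst p \<union> snd p) (fst p) s L}
     = (\<Sum>U\<in>UU. card {A. A \<subseteq> U \<and> card A = m \<and> badw (A \<union> (U - A)) A s L})"
    using card_pairs_pred[OF fS, of m k "\<lambda>A B. badw (A \<union> B) A s L"] mk nS unfolding UU_def by simp
  also have "\<dots> = (\<Sum>U\<in>UU. card {A. A \<subseteq> U \<and> card A = m \<and> badw U A s L})"
  proof (rule sum.cong[OF refl])
    fix U assume "U \<in> UU"
    have "{A. A \<subseteq> U \<and> card A = m \<and> badw (A \<union> (U - A)) A s L} = {A. A \<subseteq> U \<and> card A = m \<and> badw U A s L}"
      by (rule Collect_cong) (metis Un_Diff_cancel Un_absorb1)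
    then show "card {A. A \<subseteq> U \<and> card A = m \<and> badw (A \<union> (U - A)) A s L} = card {A. A \<subseteq> U \<and> card A = m \<and> badw U A s L}"
      by simp
  qed
  finally have eq: "real (card {p\<in>Pairs S m k. badw (fst p \<union> snd p) (fst p) s L})
     = (\<Sum>U\<in>UU. real (card {A. A \<subseteq> U \<and> card A = m \<and> badw U A s L}))" by simp
  have each: "real (card {A. A \<subseteq> U \<and> card A = m \<and> badw U A s L}) \<le> \<epsilon> * real (card {A. A \<subseteq> U \<and> card A = m})"
    if U: "U \<in> UU" for U
  proof -
    have fU: "finite U" using U fS unfolding UU_def by (auto intro: finite_subset)
    have cU: "card U = N" using U unfolding UU_def N_def by simp
    have cA: "card {A. A \<subseteq> U \<and> card A = m} = N choose m" using n_subsets[OF fU] cU by simp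
    show ?thesis
    proof (cases "s \<le> N")
      case False
      then have "{A. A \<subseteq> U \<and> card A = m \<and> badw U A s L} = {}" unfolding badw_def using cU by auto
      then have "real (card {A. A \<subseteq> U \<and> card A = m \<and> badw U A s L}) = 0"
        by (metis card.empty of_nat_0)
      moreover have "0 \<le> \<epsilon> * real (card {A. A \<subseteq> U \<and> card A = m})" using e0 by simp
      ultimately show ?thesis by linarith
    next
      case True
      have "card {A. A \<subseteq> U \<and> card A = m \<and> badw U A s L} \<le> N * ((s choose L) * ((N - (s - L)) choose m))"
        by (rule count_bad[OF fU cU Ls s0])
      then have "real (card {A. A \<subseteq> U \<and> card A = m \<and> badw U A s L})
          \<le> real (N * ((s choose L) * ((N - (s - L)) choose m)))"
        by (simp only: of_nat_le_iff)
      also have "\<dots> = real N * real (s choose L) * real ((N - (s - L)) choose m)" by simp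
      finally have "real (card {A. A \<subseteq> U \<and> card A = m \<and> badw U A s L}) * 2 ^ (s - L)
          \<le> real N * real (s choose L) * real ((N - (s - L)) choose m) * 2 ^ (s - L)"
        by (rule mult_right_mono) simp
      also have "\<dots> = real N * real (s choose L) * (real ((N - (s - L)) choose m) * 2 ^ (s - L))"
        by (simp only: mult.assoc)
      also have "\<dots> \<le> real N * real (s choose L) * real (N choose m)"
      proof (rule mult_left_mono)
        have "((N - (s - L)) choose m) * 2 ^ (s - L) \<le> N choose m"
          using True km unfolding N_def by (intro binom_ratio) auto
        then show "real ((N - (s - L)) choose m) * 2 ^ (s - L) \<le> real (N choose m)"
          by (metis of_nat_le_iff of_nat_mult of_nat_numeral of_nat_power)
      qed simp
      also have "\<dots> \<le> real n * real (s choose L) * real (N choose m)"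
        using mk unfolding N_def by (intro mult_right_mono) auto
      finally have "real (card {A. A \<subseteq> U \<and> card A = m \<and> badw U A s L})
          \<le> real n * real (s choose L) * real (N choose m) / 2 ^ (s - L)"
        by (simp add: field_simps)
      then show ?thesis unfolding \<epsilon>_def cA by (simp add: field_simps)
    qed
  qed
  have "(\<Sum>U\<in>UU. real (card {A. A \<subseteq> U \<and> card A = m \<and> badw U A s L}))
        \<le> (\<Sum>U\<in>UU. \<epsilon> * real (card {A. A \<subseteq> U \<and> card A = m}))"
    by (rule sum_mono) (rule each)
  also have "\<dots> = \<epsilon> * real (card (Pairs S m k))"
    unfolding cP by (simp add: sum_distrib_left)
  finally show ?thesis unfolding eq \<epsilon>_def by (simp add: mult.commute)
qed

lemma pow_over_fact_le_exp:
  fixes x :: real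
  assumes "x \<ge> 0"
  shows "x ^ n / fact n \<le> exp x"
proof -
  have sm: "(\<lambda>n. x ^ n /\<^sub>R fact n) sums exp x" by (rule exp_converges)
  have "(\<Sum>i\<in>{n}. x ^ i /\<^sub>R fact i) \<le> (\<Sum>i. x ^ i /\<^sub>R fact i)"
    using sm assms by (intro sum_le_suminf) (auto simp: sums_iff)
  then show ?thesis using sm by (simp add: sums_iff divide_inverse mult.commute)
qed

lemma exp_le_4pow: "exp (real L) \<le> 4 ^ L"
proof -
  have "1 + (-1/2) \<le> exp (-1/2 :: real)" by (rule exp_ge_add_one_self)
  then have "exp (1/2 :: real) \<le> 2" by (simp add: exp_minus field_simps)
  then have "exp (1/2 :: real) ^ 2 \<le> 2 ^ 2" by (intro power_mono) auto
  then have e1: "exp (1 :: real) \<le> 4" by (simp add: exp_of_nat_mult[symmetric])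
  have "exp (real L) = exp 1 ^ L" using exp_of_nat_mult[of L 1] by simp
  also have "\<dots> \<le> 4 ^ L" using e1 by (intro power_mono) auto
  finally show ?thesis .
qed

lemma binom_bound:
  assumes L0: "L > 0" and sL: "real s \<le> 56 * real L"
  shows "real (s choose L) \<le> 2 ^ (8 * L)"
proof -
  have f0: "fact L > (0::real)" by simp
  have "(s choose L) * fact L \<le> s ^ L" by (rule binomial_fact_pow)
  then have "real ((s choose L) * fact L) \<le> real (s ^ L)" by (simp only: of_nat_le_iff)
  then have b1: "real (s choose L) * fact L \<le> real s ^ L" by simp
  have "real L ^ L / fact L \<le> exp (real L)" by (rule pow_over_fact_le_exp) simp
  then have b2: "real L ^ L \<le> exp (real L) * fact L" using f0 by (simp add: pos_divide_le_eq)
  have "real (s choose L) * real L ^ L \<le> real (s choose L) * (exp (real L) * fact L)"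
    using b2 by (intro mult_left_mono) auto
  also have "\<dots> = exp (real L) * (real (s choose L) * fact L)" by (simp only: ac_simps)
  also have "\<dots> \<le> exp (real L) * real s ^ L" using b1 by (intro mult_left_mono) auto
  also have "\<dots> \<le> 4 ^ L * real s ^ L" using exp_le_4pow[of L] by (intro mult_right_mono) auto
  also have "\<dots> \<le> 4 ^ L * (56 * real L) ^ L" using sL by (intro mult_left_mono power_mono) auto
  also have "\<dots> = (4 * (56 * real L)) ^ L" by (simp only: power_mult_distrib)
  also have "\<dots> = (224 * real L) ^ L" by simp
  also have "\<dots> = 224 ^ L * real L ^ L" by (simp only: power_mult_distrib)
  finally have "real (s choose L) * real L ^ L \<le> 224 ^ L * real L ^ L" .
  moreover have "real L ^ L > 0" using L0 by simp
  ultimately have "real (s choose L) \<le> 224 ^ L" by (rule mult_right_le_imp_le)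
  also have "(224::real) ^ L \<le> 256 ^ L" by (intro power_mono) auto
  also have "(256::real) ^ L = 2 ^ (8 * L)" by (simp add: power_mult)
  finally show ?thesis .
qed

lemma numeric:
  fixes \<alpha> :: real and d n :: nat
  assumes al: "\<alpha> \<ge> 2" and n2: "n \<ge> 2" and ld: "log 2 (real n) \<le> real d"
  shows "0 < nat \<lfloor>112 * \<alpha> * real d\<rfloor>"
    "nat \<lceil>2 * \<alpha> * real d\<rceil> \<le> nat \<lfloor>112 * \<alpha> * real d\<rfloor>"
    "real n * real (nat \<lfloor>112 * \<alpha> * real d\<rfloor> choose nat \<lceil>2 * \<alpha> * real d\<rceil>)
       / 2 ^ (nat \<lfloor>112 * \<alpha> * real d\<rfloor> - nat \<lceil>2 * \<alpha> * real d\<rceil>) \<le> 1 / real n ^ 4"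
proof -
  define L where "L = nat \<lceil>2 * \<alpha> * real d\<rceil>"
  define s where "s = nat \<lfloor>112 * \<alpha> * real d\<rfloor>"
  define a where "a = \<alpha> * real d"
  have "log 2 2 \<le> log 2 (real n)" using n2 by simp
  then have d1: "real d \<ge> 1" using ld by simp
  have a2: "a \<ge> 2 * real d" unfolding a_def using al d1 by (simp add: mult_right_mono)
  have aa: "a \<ge> 2" using a2 d1 by simp
  have e2: "2 * \<alpha> * real d = 2 * a" unfolding a_def by (simp only: mult.assoc)
  have e112: "112 * \<alpha> * real d = 112 * a" unfolding a_def by (simp only: mult.assoc)
  have cL: "of_int \<lceil>2 * a\<rceil> - 1 < 2 * a" "2 * a \<le> of_int \<lceil>2 * a\<rceil>"
    using ceiling_correct[of "2 * a"] by auto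
  have "0 \<le> \<lceil>2 * a\<rceil>" using aa by simp
  then have rL: "real L = of_int \<lceil>2 * a\<rceil>" unfolding L_def e2 by simp
  have Lr: "2 * a \<le> real L" "real L \<le> 2 * a + 1" using cL rL by linarith+
  have fL: "of_int \<lfloor>112 * a\<rfloor> \<le> 112 * a" "112 * a < of_int \<lfloor>112 * a\<rfloor> + 1"
    using floor_correct[of "112 * a"] by auto
  have "0 \<le> \<lfloor>112 * a\<rfloor>" using aa by simp
  then have rs: "real s = of_int \<lfloor>112 * a\<rfloor>" unfolding s_def e112 by simp
  have sr: "real s \<le> 112 * a" "112 * a - 1 \<le> real s" using fL rs by linarith+
  have L0: "L > 0" using Lr aa by simp
  have s0: "0 < s" using sr aa by simp
  have Ls: "L \<le> s" using Lr sr aa by simp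
  have key: "5 * d + 9 * L \<le> s"
  proof -
    have "real (5 * d + 9 * L) \<le> real s" using Lr sr aa a2 by simp
    then show ?thesis by linarith
  qed
  have nd: "real n \<le> 2 ^ d"
  proof -
    have "real n = 2 powr (log 2 (real n))" using n2 by simp
    also have "\<dots> \<le> 2 powr (real d)" using ld by (intro powr_mono) auto
    also have "\<dots> = 2 ^ d" by (simp add: powr_realpow)
    finally show ?thesis .
  qed
  have cb: "real (s choose L) \<le> 2 ^ (8 * L)"
    using binom_bound[OF L0] sr Lr by simp
  have "real n ^ 5 * real (s choose L) \<le> (2 ^ d) ^ 5 * 2 ^ (8 * L)"
    using nd cb by (intro mult_mono power_mono) auto
  also have "((2::real) ^ d) ^ 5 * 2 ^ (8 * L) = 2 ^ (5 * d + 8 * L)"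
  proof -
    have "((2::real) ^ d) ^ 5 = 2 ^ (5 * d)" by (metis power_mult mult.commute)
    then show ?thesis by (simp only: power_add)
  qed
  also have "\<dots> \<le> (2::real) ^ (s - L)" using key by (intro power_increasing) auto
  finally have main: "real n ^ 5 * real (s choose L) \<le> 2 ^ (s - L)" .
  have np: "real n > 0" using n2 by simp
  have tp: "(2::real) ^ (s - L) > 0" by simp
  have p5: "real n ^ 5 = real n * real n ^ 4" by (simp add: eval_nat_numeral)
  have "real n * real (s choose L) * real n ^ 4 = real n ^ 5 * real (s choose L)"
    unfolding p5 by (simp only: ac_simps)
  then have m2: "real n * real (s choose L) * real n ^ 4 \<le> 2 ^ (s - L)" using main by (simp only:)
  have "real n * real (s choose L) / 2 ^ (s - L) \<le> 1 / real n ^ 4"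
    using m2 np tp by (simp add: divide_le_eq le_divide_eq)
  then show "0 < s" "L \<le> s" "real n * real (s choose L) / 2 ^ (s - L) \<le> 1 / real n ^ 4"
    using s0 Ls by (simp_all add: L_def s_def)
qed

lemma nat_le_ceil: "real c \<le> x \<Longrightarrow> c \<le> nat \<lceil>x\<rceil>"
  by (metis ceiling_mono ceiling_of_nat nat_int nat_mono)

lemma main_bound:
  fixes \<alpha> :: real and S :: "'a::linorder set" and n m k :: nat
  assumes al: "\<alpha> \<ge> 2" and fS: "finite S" and nS: "card S = n" and m64: "real m \<ge> 64"
    and km: "k \<le> m" and mkn: "m + k \<le> n"
  shows "measure_pmf.prob (sample_AB S m k)
             {(A, B). \<exists>As (d::nat) r T.
                 distinct As \<and> set As = A \<and>
                 real (disl As) \<le> real d \<and> log 2 (real n) \<le> real d \<and>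
                 real d \<le> sqrt (real n) / (2160 * \<alpha>) \<and>
                 (\<forall>x\<in>B. 1 \<le> r x \<and> r x \<le> m \<and>
                        \<bar>real (r x) - real (rank x A)\<bar> \<le> \<alpha> * real d) \<and>
                 insertion_result As B r T \<and>
                 real (disl T) > 226 * \<alpha> * real d}
           \<le> 2 / real n ^ 3" (is "measure_pmf.prob _ ?E \<le> _")
proof -
  define P where "P = Pairs S m k"
  have n64: "n \<ge> 64" using m64 mkn by linarith
  have n2: "n \<ge> 2" using n64 by simp
  have np: "real n > 0" using n2 by simp
  have samp: "sample_AB S m k = pmf_of_set P" unfolding P_def using sample_eq[OF fS] mkn nS by simp
  have fP: "finite P" unfolding P_def using finite_Pairs[OF fS] .
  have Pne: "P \<noteq> {}"
  proof -
    obtain A where A: "A \<subseteq> S" "card A = m" using mkn nS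
      by (metis le_add1 order_trans obtain_subset_with_card_n)
    have fA: "finite A" using A fS finite_subset by blast
    have "k \<le> card (S - A)" using A fA mkn nS by (simp add: card_Diff_subset)
    then obtain B where "B \<subseteq> S - A" "card B = k" by (meson obtain_subset_with_card_n)
    then have "(A, B) \<in> P" unfolding P_def Pairs_def using A by simp
    then show ?thesis by auto
  qed
  have cP: "card P > 0" using fP Pne by (simp add: card_gt_0_iff)
  define Ld where "Ld d = nat \<lceil>2 * \<alpha> * real d\<rceil>" for d :: nat
  define sd where "sd d = nat \<lfloor>112 * \<alpha> * real d\<rfloor>" for d :: nat
  define Dset where "Dset = {d::nat. d \<le> n \<and> log 2 (real n) \<le> real d}"
  define Bad where "Bad d = {p\<in>P. badw (fst p \<union> snd p) (fst p) (sd d) (Ld d)}" for d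
  have fD: "finite Dset" unfolding Dset_def by simp
  have cD: "card Dset \<le> n + 1"
  proof -
    have "Dset \<subseteq> {..n}" unfolding Dset_def by auto
    then show ?thesis using card_mono[OF finite_atMost, of Dset n] by simp
  qed
  have incl: "P \<inter> ?E \<subseteq> (\<Union>d\<in>Dset. Bad d)"
  proof
    fix p assume pPE: "p \<in> P \<inter> ?E"
    obtain A B where pe: "p = (A, B)" by fastforce
    have pP: "(A, B) \<in> P" using pPE pe by simp
    then have AS: "A \<subseteq> S" "card A = m" "B \<subseteq> S - A" "card B = k"
      unfolding P_def Pairs_def by auto
    have fB: "finite B" using AS fS finite_subset by blast
    have fA: "finite A" using AS fS finite_subset by blast
    from pPE pe obtain As d r T where w:
      "distinct As" "set As = A"
      "real (disl As) \<le> real d" "log 2 (real n) \<le> real d"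
      "real d \<le> sqrt (real n) / (2160 * \<alpha>)"
      "\<forall>x\<in>B. 1 \<le> r x \<and> r x \<le> m \<and> \<bar>real (r x) - real (rank x A)\<bar> \<le> \<alpha> * real d"
      "insertion_result As B r T"
      "real (disl T) > 226 * \<alpha> * real d"
      by auto
    have "log 2 2 \<le> log 2 (real n)" using n2 by simp
    then have d1: "real d \<ge> 1" using w(4) by simp
    have dn: "d \<le> n"
    proof -
      have s1: "sqrt (real n) \<ge> 1" using n2 by simp
      have "real d \<le> sqrt (real n) / (2160 * \<alpha>)" by (rule w(5))
      also have "\<dots> \<le> sqrt (real n)" using al s1 by (simp add: divide_le_eq)
      also have "\<dots> \<le> sqrt (real n) * sqrt (real n)"
      proof -
        have s2: "sqrt (real n) * 1 \<le> sqrt (real n) * sqrt (real n)"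
          by (rule mult_left_mono[OF s1]) simp
        then show ?thesis by (simp only: mult_1_right)
      qed
      also have "\<dots> = real n" by simp
      finally show ?thesis by linarith
    qed
    have dD: "d \<in> Dset" unfolding Dset_def using dn w(4) by simp
    obtain s0: "0 < sd d" and Ls: "Ld d \<le> sd d"
      using numeric[OF al n2 w(4)] unfolding sd_def Ld_def by blast
    have bad: "badw (A \<union> B) A (sd d) (Ld d)"
    proof (rule ccontr)
      assume nb: "\<not> badw (A \<union> B) A (sd d) (Ld d)"
      have ABA: "A \<union> B - A = B" using AS by auto
      have IP: "\<forall>u v. real (card {a\<in>set As. u \<le> a \<and> a \<le> v}) \<le> 2 * \<alpha> * real d
                 \<longrightarrow> card {b\<in>B. u \<le> b \<and> b \<le> v} < sd d"
      proof (intro allI impI)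
        fix u v assume c: "real (card {a\<in>set As. u \<le> a \<and> a \<le> v}) \<le> 2 * \<alpha> * real d"
        have "card {a\<in>A. u \<le> a \<and> a \<le> v} \<le> Ld d" unfolding Ld_def using c w(2) nat_le_ceil by blast
        from IP_from_good[of "A \<union> B" A "sd d" "Ld d" u v, OF _ _ nb this]
        show "card {b\<in>B. u \<le> b \<and> b \<le> v} < sd d" using fA fB ABA by simp
      qed
      have disj: "B \<inter> set As = {}" using AS w(2) by auto
      have rB: "\<forall>x\<in>B. 1 \<le> r x \<and> \<bar>real (r x) - real (rank x (set As))\<bar> \<le> \<alpha> * real d"
        using w(6) w(2) by auto
      have "real (disl T) \<le> \<alpha> * real d + 2 * real (sd d)"
        using det_bound[OF w(1) disj fB _ _ s0 w(3) rB w(7) IP] al by simp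
      also have "real (sd d) \<le> 112 * \<alpha> * real d"
      proof -
        have "0 \<le> \<lfloor>112 * \<alpha> * real d\<rfloor>" using al d1 by simp
        then have "real (sd d) = of_int \<lfloor>112 * \<alpha> * real d\<rfloor>" unfolding sd_def by simp
        then show ?thesis by simp
      qed
      then have "\<alpha> * real d + 2 * real (sd d) \<le> \<alpha> * real d + 2 * (112 * \<alpha> * real d)" by simp
      finally have "real (disl T) \<le> 225 * (\<alpha> * real d)" by simp
      moreover have "225 * (\<alpha> * real d) \<le> 226 * (\<alpha> * real d)" using al d1 by simp
      ultimately show False using w(8) by simp
    qed
    then have "p \<in> Bad d" unfolding Bad_def using pP pe by simp
    then show "p \<in> (\<Union>d\<in>Dset. Bad d)" using dD by blast
  qed
  have "card (P \<inter> ?E) \<le> card (\<Union>d\<in>Dset. Bad d)"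
  proof (rule card_mono[OF _ incl])
    have "(\<Union>d\<in>Dset. Bad d) \<subseteq> P" unfolding Bad_def by blast
    then show "finite (\<Union>d\<in>Dset. Bad d)" using fP by (rule finite_subset)
  qed
  also have "\<dots> \<le> (\<Sum>d\<in>Dset. card (Bad d))" by (rule card_UN_le[OF fD])
  finally have "real (card (P \<inter> ?E)) \<le> real (\<Sum>d\<in>Dset. card (Bad d))"
    by (simp only: of_nat_le_iff)
  also have "\<dots> = (\<Sum>d\<in>Dset. real (card (Bad d)))" by (rule of_nat_sum)
  also have "\<dots> \<le> (\<Sum>d\<in>Dset. real (card P) * (1 / real n ^ 4))"
  proof (rule sum_mono)
    fix d assume dD: "d \<in> Dset"
    have ld: "log 2 (real n) \<le> real d" using dD unfolding Dset_def by simp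
    obtain s0: "0 < sd d" and Ls: "Ld d \<le> sd d"
      and nb: "real n * real (sd d choose Ld d) / 2 ^ (sd d - Ld d) \<le> 1 / real n ^ 4"
      using numeric[OF al n2 ld] unfolding sd_def Ld_def by blast
    have "real (card (Bad d)) \<le> real (card P) * (real n * real (sd d choose Ld d) / 2 ^ (sd d - Ld d))"
      unfolding Bad_def P_def by (rule bad_count[OF fS nS mkn km s0 Ls])
    also have "\<dots> \<le> real (card P) * (1 / real n ^ 4)" using nb by (intro mult_left_mono) auto
    finally show "real (card (Bad d)) \<le> real (card P) * (1 / real n ^ 4)" .
  qed
  also have "\<dots> = real (card Dset) * (real (card P) * (1 / real n ^ 4))" by (rule sum_constant)
  also have "\<dots> \<le> (real n + 1) * (real (card P) * (1 / real n ^ 4))"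
    using cD by (intro mult_right_mono) auto
  finally have c2: "real (card (P \<inter> ?E)) \<le> (real n + 1) * (real (card P) * (1 / real n ^ 4))" .
  have cPr: "real (card P) > 0" using cP by simp
  have "measure_pmf.prob (sample_AB S m k) ?E = real (card (P \<inter> ?E)) / real (card P)"
    unfolding samp using measure_pmf_of_set[OF Pne fP] by simp
  also have "\<dots> \<le> (real n + 1) * (real (card P) * (1 / real n ^ 4)) / real (card P)"
    using c2 cPr by (intro divide_right_mono) auto
  also have "\<dots> = (real n + 1) / real n ^ 4" using cPr by simp
  also have "\<dots> \<le> 2 / real n ^ 3"
  proof -
    have "real n + 1 \<le> 2 * real n" using n2 by simp
    then have "(real n + 1) / real n ^ 4 \<le> (2 * real n) / real n ^ 4"
      by (intro divide_right_mono) auto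
    also have "(2 * real n) / real n ^ 4 = 2 / real n ^ 3" using np by (simp add: eval_nat_numeral)
    finally show ?thesis .
  qed
  finally show ?thesis .
qed

theorem lemma3p3:
  fixes \<alpha> :: real
  assumes "\<alpha> \<ge> 2"
  shows "\<exists>C>0. \<forall>(S :: 'a::linorder set) n m k.
           finite S \<longrightarrow> card S = n \<longrightarrow>
           real m \<ge> 64 \<longrightarrow> real m \<ge> sqrt (real n) \<longrightarrow>
           k \<le> m \<longrightarrow> m + k \<le> n \<longrightarrow>
           measure_pmf.prob (sample_AB S m k)
             {(A, B). \<exists>As (d::nat) r T.
                 distinct As \<and> set As = A \<and>
                 real (disl As) \<le> real d \<and> log 2 (real n) \<le> real d \<and>
                 real d \<le> sqrt (real n) / (2160 * \<alpha>) \<and>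
                 (\<forall>x\<in>B. 1 \<le> r x \<and> r x \<le> m \<and>
                        \<bar>real (r x) - real (rank x A)\<bar> \<le> \<alpha> * real d) \<and>
                 insertion_result As B r T \<and>
                 real (disl T) > 226 * \<alpha> * real d}
           \<le> C / real n ^ 3"
proof (intro exI[of _ "2::real"] conjI allI impI)
  show "(0::real) < 2" by simp
next
  fix S :: "'a set" and n m k :: nat
  assume "finite S" "card S = n" "real m \<ge> 64" "real m \<ge> sqrt (real n)" "k \<le> m" "m + k \<le> n"
  then show "measure_pmf.prob (sample_AB S m k)
             {(A, B). \<exists>As (d::nat) r T.
                 distinct As \<and> set As = A \<and>
                 real (disl As) \<le> real d \<and> log 2 (real n) \<le> real d \<and>
                 real d \<le> sqrt (real n) / (2160 * \<alpha>) \<and>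
                 (\<forall>x\<in>B. 1 \<le> r x \<and> r x \<le> m \<and>
                        \<bar>real (r x) - real (rank x A)\<bar> \<le> \<alpha> * real d) \<and>
                 insertion_result As B r T \<and>
                 real (disl T) > 226 * \<alpha> * real d}
           \<le> 2 / real n ^ 3"
    using main_bound[OF assms] by blast
qed

end
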